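(* Let $\sigma>0$, $\eta>0$, $\hat\alpha>0$, $h>0$, $r\ge0$, $a\in\mathbb{R}$, $\beta\ge0$, and let $v_\beta\in C^1[0,\infty)$ be the unique solution of $\frac{\sigma^2}2v'(y)=\beta+\frac{\hat\alpha}4v(y)^2+\eta y(v(y)-\frac h\eta)-av(y)$, $y\ge0$, $v(0)=-r$. If $y>0$ is a local maximizer of $v_\beta$, then $v_\beta(y)\le h/\eta$. *)

theory Defs
  imports "HOL-Analysis.Analysis"
begin

end

theory Submission
  imports Defs
begin

theorem lemma9:
  fixes \<sigma> \<eta> \<alpha> h r a \<beta> y :: real
    and v v' :: "real \<Rightarrow> real"
  assumes "\<sigma> > 0" and "\<eta> > 0" and "\<alpha> > 0" and "h > 0" and "r \<ge> 0" and "\<beta> \<ge> 0"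
    and deriv: "\<And>t. t \<ge> 0 \<Longrightarrow> (v has_real_derivative v' t) (at t within {0..})"
    and cont: "continuous_on {0..} v'"
    and ode: "\<And>t. t \<ge> 0 \<Longrightarrow>
       \<sigma>\<^sup>2 / 2 * v' t = \<beta> + \<alpha> / 4 * (v t)\<^sup>2 + \<eta> * t * (v t - h / \<eta>) - a * v t"
    and init: "v 0 = - r"
    and "y > 0"
    and locmax: "\<exists>e>0. \<forall>z. z \<ge> 0 \<and> \<bar>z - y\<bar> < e \<longrightarrow> v z \<le> v y"
  shows "v y \<le> h / \<eta>"
proof (rule ccontr)
  assume neg: "\<not> v y \<le> h / \<eta>"
  have dat: "(v has_real_derivative v' t) (at t)" if "t > 0" for t
  proof -
    have sub: "{0<..} \<subseteq> {0::real..}" by (simp add: subset_eq)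
    have 1: "0 \<le> t" using that by simp
    have "(v has_real_derivative v' t) (at t within {0<..})"
      by (rule DERIV_subset[OF deriv[OF 1] sub])
    moreover have "at t within {0<..} = at t" by (rule at_within_open) (use that in auto)
    ultimately show ?thesis by simp
  qed
  obtain e where e: "e > 0" "\<forall>z. z \<ge> 0 \<and> \<bar>z - y\<bar> < e \<longrightarrow> v z \<le> v y"
    using locmax by blast
  have v0: "v' y = 0"
  proof (rule DERIV_local_max[OF dat[OF \<open>y > 0\<close>], of "min e y"])
    show "0 < min e y" using e \<open>y>0\<close> by simp
    show "\<forall>z. \<bar>y - z\<bar> < min e y \<longrightarrow> v z \<le> v y" using e by (auto simp: abs_if split: if_splits)
  qed
  define w where "w t = 2 / \<sigma>\<^sup>2 * (\<beta> + \<alpha> / 4 * (v t)\<^sup>2 + \<eta> * t * (v t - h / \<eta>) - a * v t)" for t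
  have vw: "v' t = w t" if "t \<ge> 0" for t
    using ode[OF that] \<open>\<sigma> > 0\<close> unfolding w_def by (simp add: field_simps)
  have vc: "(v has_real_derivative 0) (at y)" using dat[OF \<open>y>0\<close>] v0 by simp
  have wd: "(w has_real_derivative 2 / \<sigma>\<^sup>2 * (\<alpha> / 4 * (2 * v y * 0) + (\<eta> * (v y - h / \<eta>) + \<eta> * y * 0) - a * 0)) (at y)"
    unfolding w_def using \<open>\<eta> > 0\<close> \<open>\<sigma> > 0\<close>
    by (auto intro!: derivative_eq_intros vc simp: field_simps power2_eq_square power4_eq_xxxx)
  have wpos: "2 / \<sigma>\<^sup>2 * (\<alpha> / 4 * (2 * v y * 0) + (\<eta> * (v y - h / \<eta>) + \<eta> * y * 0) - a * 0) > 0"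
    using neg \<open>\<sigma>>0\<close> \<open>\<eta>>0\<close> by simp
  obtain d where d: "d > 0" "\<forall>k>0. k < d \<longrightarrow> w y < w (y + k)"
    using DERIV_pos_inc_right[OF wd wpos] by blast
  define k where "k = min d e / 2"
  have k: "k > 0" "k < d" "k < e" using d e by (auto simp: k_def)
  obtain z where z: "z > y" "z < y + k" "v (y + k) - v y = (y + k - y) * v' z"
    using MVT2[of y "y + k" v v'] k dat \<open>y>0\<close> by force
  have "w y = 0" using vw[of y] v0 \<open>y>0\<close> by simp
  moreover have "w y < w z" using d(2)[rule_format, of "z - y"] z k by simp
  ultimately have "v' z > 0" using vw[of z] z \<open>y>0\<close> by simp
  then have "k * v' z > 0" using k(1) by simp
  then have "v (y + k) > v y" using z(3) by simp
  moreover have "v (y + k) \<le> v y" using e(2)[rule_format, of "y+k"] k \<open>y>0\<close> by simp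
  ultimately show False by simp
qed

end
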